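(* Let $S$ be $\mathbb{R}$ or $\mathbb{C}$ and $\epsilon>0$. For each $m$, let $\boldsymbol{\varepsilon}$ denote the constant vector $(\epsilon,\dots,\epsilon)$ of length $m-1$ when used in $\mathbf{CP}^{\boldsymbol{\varepsilon}}_m(S)$. Then for all $n\in\mathbb{N}$, $$g\big[\mathbf{CP}_n(S)\big]\ \ge\ \frac{g\big[\mathbf{CP}^{\boldsymbol{\varepsilon}}_n(S)\big]}{1+\epsilon(2+\epsilon)\,g\big[\mathbf{CP}^{\boldsymbol{\varepsilon}}_{n-1}(S)\big]+\epsilon\sum_{i=1}^{n-2}g\big[\mathbf{CP}^{\boldsymbol{\varepsilon}}_i(S)\big]}.$$
   Context: For an $n\times n$ complex matrix $A=(a_{i,j})$, Gaussian elimination without pivoting is the recursion $a^{(1)}_{i,j}=a_{i,j}$ and $a^{(k+1)}_{i,j}=a^{(k)}_{i,j}-a^{(k)}_{i,k}a^{(k)}_{k,j}/a^{(k)}_{k,k}$ for $k+1\le i,j\le n$, $k=1,\dots,n-1$ (defined when all pivots are nonzero). Growth factor: $g(A)=\max_{i,j,k}|a^{(k)}_{i,j}|/\max_{i,j}|a_{i,j}|$; for a set $\mathbf{X}$ of matrices, $g[\mathbf{X}]=\sup_{A\in\mathbf{X}}g(A)$. $\mathbf{CP}_n(S)$ is the set of invertible $A\in S^{n\times n}$ for which elimination is defined and $|a^{(k)}_{i,j}|\le|a^{(k)}_{k,k}|$ for all $k$ and $i,j\ge k$. For $\boldsymbol{\varepsilon}=(\varepsilon_1,\dots,\varepsilon_{n-1})$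 with $\varepsilon_i>-1$, $\mathbf{CP}^{\boldsymbol{\varepsilon}}_n(S)$ is the set of invertible $A\in S^{n\times n}$ for which elimination is defined and $|a^{(k)}_{i,j}|\le(1+\varepsilon_k)|a^{(k)}_{k,k}|$ for all $k\le n-1$ and $i,j\ge k$, $(i,j)\neq(k,k)$. *)

theory Defs
  imports "HOL-Analysis.Analysis" "HOL-Library.Extended_Real"
begin

text \<open>An n x n complex matrix is a function nat => nat => complex, indices 1..n,
  with entries outside {1..n} x {1..n} equal to 0.  Real matrices are those
  with all entries in the reals (as a subset of the complex numbers).\<close>

definition mat_in :: "nat \<Rightarrow> complex set \<Rightarrow> (nat \<Rightarrow> nat \<Rightarrow> complex) \<Rightarrow> bool" where
  "mat_in n S A \<longleftrightarrow> (\<forall>i j. (i \<in> {1..n} \<and> j \<in> {1..n} \<longrightarrow> A i j \<in> S)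
                              \<and> (\<not> (i \<in> {1..n} \<and> j \<in> {1..n}) \<longrightarrow> A i j = 0))"

definition mat_invertible :: "nat \<Rightarrow> (nat \<Rightarrow> nat \<Rightarrow> complex) \<Rightarrow> bool" where
  "mat_invertible n A \<longleftrightarrow> (\<exists>B. \<forall>i\<in>{1..n}. \<forall>j\<in>{1..n}.
      (\<Sum>l=1..n. A i l * B l j) = (if i = j then 1 else 0))"

text \<open>Gaussian elimination without pivoting: ge A k i j is a^(k)_{i,j}.\<close>
fun ge :: "(nat \<Rightarrow> nat \<Rightarrow> complex) \<Rightarrow> nat \<Rightarrow> nat \<Rightarrow> nat \<Rightarrow> complex" where
  "ge A 0 i j = A i j"
| "ge A (Suc 0) i j = A i j"
| "ge A (Suc (Suc k)) i j =
     ge A (Suc k) i j - ge A (Suc k) i (Suc k) * ge A (Suc k) (Suc k) j / ge A (Suc k) (Suc k) (Suc k)"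

definition elim_defined :: "nat \<Rightarrow> (nat \<Rightarrow> nat \<Rightarrow> complex) \<Rightarrow> bool" where
  "elim_defined n A \<longleftrightarrow> (\<forall>k\<in>{1..n-1}. ge A k k k \<noteq> 0)"

definition growth :: "nat \<Rightarrow> (nat \<Rightarrow> nat \<Rightarrow> complex) \<Rightarrow> real" where
  "growth n A = (if n = 0 then 1 else
     Max {cmod (ge A k i j) | k i j. k \<in> {1..n} \<and> i \<in> {k..n} \<and> j \<in> {k..n}}
     / Max {cmod (A i j) | i j. i \<in> {1..n} \<and> j \<in> {1..n}})"

definition CP :: "nat \<Rightarrow> complex set \<Rightarrow> (nat \<Rightarrow> nat \<Rightarrow> complex) set" where
  "CP n S = {A. mat_in n S A \<and> mat_invertible n A \<and> elim_defined n A \<and>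
     (\<forall>k\<in>{1..n}. \<forall>i\<in>{k..n}. \<forall>j\<in>{k..n}. cmod (ge A k i j) \<le> cmod (ge A k k k))}"

definition CPeps :: "nat \<Rightarrow> (nat \<Rightarrow> real) \<Rightarrow> complex set \<Rightarrow> (nat \<Rightarrow> nat \<Rightarrow> complex) set" where
  "CPeps n eps S = {A. mat_in n S A \<and> mat_invertible n A \<and> elim_defined n A \<and>
     (\<forall>k\<in>{1..n-1}. \<forall>i\<in>{k..n}. \<forall>j\<in>{k..n}. (i, j) \<noteq> (k, k) \<longrightarrow>
        cmod (ge A k i j) \<le> (1 + eps k) * cmod (ge A k k k))}"

definition gset :: "nat \<Rightarrow> (nat \<Rightarrow> nat \<Rightarrow> complex) set \<Rightarrow> ereal" where
  "gset n X = (SUP A\<in>X. ereal (growth n A))"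

end

theory Submission
  imports Defs "Jordan_Normal_Form.Determinant"
begin


lemma ge_Suc: "k \<ge> 1 \<Longrightarrow> ge A (Suc k) i j = ge A k i j - ge A k i k * ge A k k j / ge A k k k"
  by (cases k) auto

definition JM :: "nat \<Rightarrow> (nat \<Rightarrow> nat \<Rightarrow> complex) \<Rightarrow> complex mat" where
  "JM n C = Matrix.mat n n (\<lambda>(i,j). C (Suc i) (Suc j))"

lemma JM_carrier[simp]: "JM n C \<in> carrier_mat n n"
  by (simp add: JM_def)

lemma JM_dim[simp]: "dim_row (JM n C) = n" "dim_col (JM n C) = n"
  by (simp_all add: JM_def)

lemma JM_index[simp]: "i < n \<Longrightarrow> j < n \<Longrightarrow> JM n C $$ (i,j) = C (Suc i) (Suc j)"
  by (simp add: JM_def)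

lemma sum_shift1: "(\<Sum>l=1..n. f l) = (\<Sum>k<n. f (Suc k))"
  by (induction n) auto

lemma prod_shift1: "(\<Prod>l=1..n. f l) = (\<Prod>k<n. f (Suc k))"
  by (induction n) auto

lemma JM_mult2:
  assumes "Y \<in> carrier_mat n n" "i < n" "j < n"
  shows "(JM n X * Y) $$ (i,j) = (\<Sum>l=1..n. X (Suc i) l * Y $$ (l - 1, j))"
proof -
  have "(JM n X * Y) $$ (i,j) = row (JM n X) i \<bullet> col Y j" using assms by simp
  also have "\<dots> = (\<Sum>k<n. X (Suc i) (Suc k) * Y $$ (k, j))"
    using assms by (auto simp: scalar_prod_def lessThan_atLeast0 intro!: sum.cong)
  also have "\<dots> = (\<Sum>l=1..n. X (Suc i) l * Y $$ (l - 1, j))"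
    unfolding sum_shift1 by simp
  finally show ?thesis .
qed

lemma JM_mult:
  assumes "i < n" "j < n"
  shows "(JM n X * JM n Y) $$ (i,j) = (\<Sum>l=1..n. X (Suc i) l * Y l (Suc j))"
  using JM_mult2[OF JM_carrier assms, of X Y] assms unfolding sum_shift1 by simp

lemma inv_imp_det:
  assumes "mat_invertible n C"
  shows "det (JM n C) \<noteq> 0"
proof -
  obtain B where B: "\<forall>i\<in>{1..n}. \<forall>j\<in>{1..n}. (\<Sum>l=1..n. C i l * B l j) = (if i = j then 1 else 0)"
    using assms unfolding mat_invertible_def by blast
  have "JM n C * JM n B = 1\<^sub>m n"
  proof (rule eq_matI)
    fix i j assume ij: "i < dim_row (1\<^sub>m n :: complex mat)" "j < dim_col (1\<^sub>m n :: complex mat)"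
    then have "i < n" "j < n" by auto
    then show "(JM n C * JM n B) $$ (i, j) = 1\<^sub>m n $$ (i, j)"
      using B[rule_format, of "Suc i" "Suc j"] JM_mult[of i n j C B] by simp
  qed auto
  then have "det (JM n C) * det (JM n B) = 1"
    using det_mult[OF JM_carrier JM_carrier, of n C B] by simp
  then show ?thesis by auto
qed

lemma det_imp_inv:
  assumes "det (JM n C) \<noteq> 0"
  shows "mat_invertible n C"
proof -
  define d where "d = det (JM n C)"
  define X where "X = (1 / d) \<cdot>\<^sub>m adj_mat (JM n C)"
  have Xc: "X \<in> carrier_mat n n" using adj_mat(1)[OF JM_carrier] by (simp add: X_def)
  have "JM n C * X = (1/d) \<cdot>\<^sub>m (JM n C * adj_mat (JM n C))"
    unfolding X_def by (rule mult_smult_distrib[OF JM_carrier adj_mat(1)[OF JM_carrier]])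
  also have "\<dots> = 1\<^sub>m n"
    using adj_mat(2)[OF JM_carrier, of n C] assms unfolding d_def[symmetric]
    by (auto intro!: eq_matI)
  finally have XX: "JM n C * X = 1\<^sub>m n" .
  show ?thesis unfolding mat_invertible_def
  proof (intro exI[of _ "\<lambda>l j. X $$ (l - 1, j - 1)"] ballI)
    fix i j assume i: "i \<in> {1..n}" and j: "j \<in> {1..n}"
    have pre: "i - 1 < n" "j - 1 < n" using i j by auto
    have "(JM n C * X) $$ (i - 1, j - 1) = (\<Sum>l=1..n. C i l * X $$ (l - 1, j - 1))"
      using JM_mult2[OF Xc pre, of C] i by (simp del: index_mult_mat)
    moreover have "(i - 1 = j - 1) = (i = j)" using i j by auto
    ultimately show "(\<Sum>l=1..n. C i l * X $$ (l - 1, j - 1)) = (if i = j then 1 else 0)"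
      using XX pre by simp
  qed
qed

definition Lf :: "(nat \<Rightarrow> nat \<Rightarrow> complex) \<Rightarrow> nat \<Rightarrow> nat \<Rightarrow> complex" where
  "Lf C i k = (if k = i then 1 else if k < i then ge C k i k / ge C k k k else 0)"

definition Uf :: "(nat \<Rightarrow> nat \<Rightarrow> complex) \<Rightarrow> nat \<Rightarrow> nat \<Rightarrow> complex" where
  "Uf C k j = (if k \<le> j then ge C k k j else 0)"

lemma telescope:
  "1 \<le> m \<Longrightarrow> m \<le> i \<Longrightarrow> m \<le> j \<Longrightarrow>
     C i j = (\<Sum>l=1..<m. ge C l i l * ge C l l j / ge C l l l) + ge C m i j"
proof (induction m)
  case 0 then show ?case by simp
next
  case (Suc m)
  show ?case
  proof (cases "m = 0")
    case True then show ?thesis by simp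
  next
    case False
    then have "C i j = (\<Sum>l=1..<m. ge C l i l * ge C l l j / ge C l l l) + ge C m i j"
      using Suc by auto
    moreover have "ge C (Suc m) i j = ge C m i j - ge C m i m * ge C m m j / ge C m m m"
      using False by (simp add: ge_Suc)
    ultimately show ?thesis using False by simp
  qed
qed

lemma LU_entry:
  assumes piv: "\<forall>k\<in>{1..n-1}. ge C k k k \<noteq> 0"
    and hi: "i \<in> {1..n}" and hj: "j \<in> {1..n}"
  shows "C i j = (\<Sum>l=1..n. Lf C i l * Uf C l j)"
proof -
  define m where "m = min i j"
  have m: "1 \<le> m" "m \<le> i" "m \<le> j" "m \<le> n" using hi hj by (auto simp: m_def min_def)
  have "(\<Sum>l=1..n. Lf C i l * Uf C l j) = (\<Sum>l=1..m. Lf C i l * Uf C l j)"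
    by (rule sum.mono_neutral_right) (use hi hj in \<open>auto simp: Lf_def Uf_def m_def\<close>)
  also have "\<dots> = (\<Sum>l=1..<m. Lf C i l * Uf C l j) + Lf C i m * Uf C m j"
    using m by (simp add: atLeastLessThanSuc_atLeastAtMost[symmetric])
  also have "(\<Sum>l=1..<m. Lf C i l * Uf C l j) = (\<Sum>l=1..<m. ge C l i l * ge C l l j / ge C l l l)"
    using m by (intro sum.cong) (auto simp: Lf_def Uf_def)
  also have "Lf C i m * Uf C m j = ge C m i j"
  proof (cases "i \<le> j")
    case True then show ?thesis by (simp add: m_def Lf_def Uf_def)
  next
    case False
    then have "m = j" "j < i" by (auto simp: m_def)
    then have "ge C j j j \<noteq> 0" using piv hi hj by auto
    then show ?thesis using \<open>m = j\<close> \<open>j < i\<close> by (simp add: Lf_def Uf_def)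
  qed
  finally show ?thesis using telescope[OF m(1-3), of C] by simp
qed

lemma JM_LU:
  assumes piv: "\<forall>k\<in>{1..n-1}. ge C k k k \<noteq> 0"
  shows "JM n C = JM n (Lf C) * JM n (Uf C)"
proof (rule eq_matI)
  fix i j assume "i < dim_row (JM n (Lf C) * JM n (Uf C))" "j < dim_col (JM n (Lf C) * JM n (Uf C))"
  then have "i < n" "j < n" by auto
  then show "JM n C $$ (i, j) = (JM n (Lf C) * JM n (Uf C)) $$ (i, j)"
    using LU_entry[OF piv, of "Suc i" "Suc j"] JM_mult[of i n j "Lf C" "Uf C"] by simp
qed auto

lemma det_JM:
  assumes piv: "\<forall>k\<in>{1..n-1}. ge C k k k \<noteq> 0"
  shows "det (JM n C) = (\<Prod>k=1..n. ge C k k k)"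
proof -
  have "det (JM n (Lf C)) = prod_list (diag_mat (JM n (Lf C)))"
    by (rule det_lower_triangular[of n]) (auto simp: Lf_def)
  also have "\<dots> = 1" by (simp add: prod_list_diag_prod Lf_def)
  finally have L: "det (JM n (Lf C)) = 1" .
  have "det (JM n (Uf C)) = prod_list (diag_mat (JM n (Uf C)))"
    by (rule det_upper_triangular[of _ n]) (auto simp: Uf_def upper_triangular_def)
  also have "\<dots> = (\<Prod>k=1..n. ge C k k k)"
    unfolding prod_shift1 by (simp add: prod_list_diag_prod Uf_def atLeast0LessThan)
  finally have U: "det (JM n (Uf C)) = (\<Prod>k=1..n. ge C k k k)" .
  show ?thesis
    unfolding JM_LU[OF piv] det_mult[OF JM_carrier JM_carrier] L U by simp
qed

lemma invertible_pivots:
  assumes "elim_defined n C" "mat_invertible n C"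
  shows "\<forall>k\<in>{1..n}. ge C k k k \<noteq> 0"
proof -
  have piv: "\<forall>k\<in>{1..n-1}. ge C k k k \<noteq> 0" using assms(1) by (simp add: elim_defined_def)
  have "(\<Prod>k=1..n. ge C k k k) \<noteq> 0" using inv_imp_det[OF assms(2)] det_JM[OF piv] by simp
  then show ?thesis by auto
qed

lemma pivots_invertible:
  assumes "\<forall>k\<in>{1..n}. ge C k k k \<noteq> 0"
  shows "mat_invertible n C"
proof -
  have piv: "\<forall>k\<in>{1..n-1}. ge C k k k \<noteq> 0" using assms by auto
  show ?thesis using det_imp_inv det_JM[OF piv] assms by auto
qed



lemma mat_in_all: "mat_in n S A \<Longrightarrow> 0 \<in> S \<Longrightarrow> A i j \<in> S"
  unfolding mat_in_def by metis

lemma ge_real: "mat_in n \<real> A \<Longrightarrow> ge A k i j \<in> \<real>"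
proof (induction k arbitrary: i j)
  case 0 then show ?case using mat_in_all[of n \<real> A] by simp
next
  case (Suc k)
  show ?case
  proof (cases k)
    case 0 then show ?thesis using Suc.prems mat_in_all[of n \<real> A] by simp
  next
    case (Suc k') then show ?thesis using Suc.IH Suc.prems by auto
  qed
qed

locale cpe =
  fixes A :: "nat \<Rightarrow> nat \<Rightarrow> complex" and n :: nat and eps :: real and S :: "complex set"
  assumes n1: "n \<ge> 1" and eps: "eps > 0" and S: "S = \<real> \<or> S = UNIV"
    and AC: "A \<in> CPeps n (\<lambda>_. eps) S"
begin

definition p where "p k = ge A k k k"
definition M where "M = Max ((\<lambda>l. cmod (p l)) ` {1..n-1} \<union> {0})"
definition y where "y k = eps * (\<Sum>l=k..n-1. cmod (p l)) + eps * (1 + eps) * M"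
definition al where "al k = sqrt (1 + y k / cmod (p k))"
definition Dl where "Dl i j = (if i = j then of_real (al i ^ 2 - 1) * p i
   else if i < j then of_real (al i - 1) * ge A i i j else of_real (al j - 1) * ge A j i j)"
definition B where "B i j = (if i \<in> {1..n} \<and> j \<in> {1..n} then A i j + Dl i j else 0)"

lemma Amat: "mat_in n S A" and Ainv: "mat_invertible n A" and Aelim: "elim_defined n A"
  using AC by (auto simp: CPeps_def)

lemma Abound:
  assumes "k \<in> {1..n-1}" "i \<in> {k..n}" "j \<in> {k..n}" "(i,j) \<noteq> (k,k)"
  shows "cmod (ge A k i j) \<le> (1 + eps) * cmod (p k)"
  using AC assms by (auto simp: CPeps_def p_def)

lemma piv_nz: "k \<in> {1..n} \<Longrightarrow> p k \<noteq> 0"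
  using invertible_pivots[OF Aelim Ainv] by (auto simp: p_def)

lemma p_pos: "k \<in> {1..n} \<Longrightarrow> cmod (p k) > 0"
  using piv_nz by auto

lemma M_ge: "l \<in> {1..n-1} \<Longrightarrow> cmod (p l) \<le> M"
  unfolding M_def by (rule Max_ge) auto

lemma M_nonneg: "0 \<le> M"
  unfolding M_def by (rule Max_ge) auto

lemma y_nonneg: "0 \<le> y k"
  unfolding y_def using eps M_nonneg by (auto intro!: add_nonneg_nonneg mult_nonneg_nonneg sum_nonneg)

lemma y_Y1:
  assumes "k \<in> {1..n-1}"
  shows "eps * (2 + eps) * cmod (p k) \<le> y k"
proof -
  have "cmod (p k) \<le> (\<Sum>l=k..n-1. cmod (p l))"
    using assms by (intro member_le_sum) auto
  moreover have "cmod (p k) \<le> M" using M_ge assms .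
  ultimately have "eps * cmod (p k) + eps * (1 + eps) * cmod (p k) \<le> y k"
    unfolding y_def using eps
    by (intro add_mono mult_left_mono) auto
  then show ?thesis by (simp add: algebra_simps)
qed

lemma y_Y2:
  assumes "1 \<le> k" "k < m" "m \<le> n"
  shows "eps * cmod (p k) + y m \<le> y k"
proof -
  have "(\<Sum>l=k..n-1. cmod (p l)) = cmod (p k) + (\<Sum>l=Suc k..n-1. cmod (p l))"
    using assms by (subst sum.atLeast_Suc_atMost) auto
  moreover have "(\<Sum>l=m..n-1. cmod (p l)) \<le> (\<Sum>l=Suc k..n-1. cmod (p l))"
    using assms by (intro sum_mono2) auto
  ultimately show ?thesis unfolding y_def using eps
    by (simp add: algebra_simps mult_left_mono)
qed

lemma y_le_y1: "1 \<le> m \<Longrightarrow> m \<le> n \<Longrightarrow> y m \<le> y 1"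
proof (cases "m = 1")
  case False
  assume "1 \<le> m" "m \<le> n"
  then have "eps * cmod (p 1) + y m \<le> y 1" using False by (intro y_Y2) auto
  moreover have "0 \<le> eps * cmod (p 1)" using eps by simp
  ultimately show ?thesis by linarith
qed simp

lemma al_sq: "al k ^ 2 = 1 + y k / cmod (p k)"
  unfolding al_def using y_nonneg by simp

lemma al_ge1: "1 \<le> al k"
  unfolding al_def using y_nonneg by simp

lemma al_ge:
  assumes "k \<in> {1..n-1}"
  shows "1 + eps \<le> al k"
proof -
  have pk: "cmod (p k) > 0" using p_pos assms by auto
  have "eps * (2 + eps) \<le> y k / cmod (p k)"
    using y_Y1[OF assms] by (subst pos_le_divide_eq[OF pk])
  moreover have "(1 + eps) ^ 2 = 1 + eps * (2 + eps)" by (simp add: power2_eq_square algebra_simps)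
  ultimately have "(1 + eps) ^ 2 \<le> al k ^ 2" unfolding al_sq by linarith
  then show ?thesis by (rule power2_le_imp_le) (use al_ge1[of k] in linarith)
qed

lemma q_abs: "k \<in> {1..n} \<Longrightarrow> al k ^ 2 * cmod (p k) = cmod (p k) + y k"
proof -
  assume "k \<in> {1..n}"
  then have pk: "cmod (p k) \<noteq> 0" using p_pos[of k] by simp
  have "(1 + y k / cmod (p k)) * cmod (p k) = cmod (p k) + y k / cmod (p k) * cmod (p k)"
    by (simp add: distrib_right)
  also have "\<dots> = cmod (p k) + y k" using pk by simp
  finally show ?thesis unfolding al_sq .
qed

lemma KB:
  "1 \<le> k \<Longrightarrow> i \<in> {k..n} \<Longrightarrow> j \<in> {k..n} \<Longrightarrow> ge B k i j = ge A k i j + Dl i j"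
proof (induction k arbitrary: i j)
  case 0 then show ?case by simp
next
  case (Suc k)
  show ?case
  proof (cases "k = 0")
    case True then show ?thesis using Suc.prems by (simp add: B_def)
  next
    case False
    then have k1: "1 \<le> k" by simp
    have kn: "k \<in> {1..n}" using Suc.prems k1 by auto
    have ik: "i \<in> {k..n}" "j \<in> {k..n}" "k \<in> {k..n}" using Suc.prems by auto
    have ki: "k < i" "k < j" using Suc.prems by auto
    define a where "a = (of_real (al k) :: complex)"
    have a0: "a \<noteq> 0" using al_ge1[of k] by (auto simp: a_def)
    have pk: "p k \<noteq> 0" using piv_nz kn .
    have e1: "ge B k i k = a * ge A k i k"
      using Suc.IH[OF k1 ik(1) ik(3)] ki by (simp add: Dl_def a_def algebra_simps)
    have e2: "ge B k k j = a * ge A k k j"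
      using Suc.IH[OF k1 ik(3) ik(2)] ki by (simp add: Dl_def a_def algebra_simps)
    have e3: "ge B k k k = a^2 * p k"
      using Suc.IH[OF k1 ik(3) ik(3)] by (simp add: Dl_def a_def p_def algebra_simps)
    have e4: "ge B k i j = ge A k i j + Dl i j" using Suc.IH[OF k1 ik(1) ik(2)] .
    have "ge B (Suc k) i j = ge B k i j - ge B k i k * ge B k k j / ge B k k k"
      using ge_Suc[OF k1] .
    also have "\<dots> = ge A k i j + Dl i j - ge A k i k * ge A k k j / p k"
      unfolding e1 e2 e3 e4 using a0 pk by (simp add: field_simps power2_eq_square)
    also have "\<dots> = ge A (Suc k) i j + Dl i j"
      using ge_Suc[OF k1, of A i j] by (simp add: p_def)
    finally show ?thesis .
  qed
qed

end


definition SS where "SS C m = {cmod (ge C k i j) | k i j. k \<in> {1..m} \<and> i \<in> {k..m} \<and> j \<in> {k..m}}"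
definition EE :: "(nat \<Rightarrow> nat \<Rightarrow> complex) \<Rightarrow> nat \<Rightarrow> real set" where "EE C m = {cmod (C i j) | i j. i \<in> {1..m} \<and> j \<in> {1..m}}"

lemma fin_SS: "finite (SS C m)"
proof -
  have "SS C m \<subseteq> (\<lambda>(k,i,j). cmod (ge C k i j)) ` ({1..m} \<times> {1..m} \<times> {1..m})"
  proof
    fix x assume "x \<in> SS C m"
    then obtain k i j where "x = cmod (ge C k i j)" "k \<in> {1..m}" "i \<in> {k..m}" "j \<in> {k..m}"
      unfolding SS_def by blast
    then show "x \<in> (\<lambda>(k,i,j). cmod (ge C k i j)) ` ({1..m} \<times> {1..m} \<times> {1..m})"
      by (intro image_eqI[where x="(k,i,j)"]) auto
  qed
  then show ?thesis by (rule finite_subset) (auto intro!: finite_imageI)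
qed

lemma fin_EE: "finite (EE C m)"
proof -
  have "EE C m \<subseteq> (\<lambda>(i,j). cmod (C i j)) ` ({1..m} \<times> {1..m})"
    by (auto simp: EE_def image_iff)
  then show ?thesis by (rule finite_subset) (auto intro!: finite_imageI)
qed

lemma SS_mem: "k \<in> {1..m} \<Longrightarrow> i \<in> {k..m} \<Longrightarrow> j \<in> {k..m} \<Longrightarrow> cmod (ge C k i j) \<in> SS C m"
  unfolding SS_def by blast

lemma EE_mem: "i \<in> {1..m} \<Longrightarrow> j \<in> {1..m} \<Longrightarrow> cmod (C i j) \<in> EE C m"
  unfolding EE_def by blast

lemma SS_le_Max: "k \<in> {1..m} \<Longrightarrow> i \<in> {k..m} \<Longrightarrow> j \<in> {k..m} \<Longrightarrow> cmod (ge C k i j) \<le> Max (SS C m)"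
  by (rule Max_ge[OF fin_SS SS_mem])

lemma EE_le_Max: "i \<in> {1..m} \<Longrightarrow> j \<in> {1..m} \<Longrightarrow> cmod (C i j) \<le> Max (EE C m)"
  by (rule Max_ge[OF fin_EE EE_mem])

lemma Max_SS_le:
  assumes "m \<ge> 1" "\<And>k i j. k \<in> {1..m} \<Longrightarrow> i \<in> {k..m} \<Longrightarrow> j \<in> {k..m} \<Longrightarrow> cmod (ge C k i j) \<le> b"
  shows "Max (SS C m) \<le> b"
proof -
  have "cmod (ge C 1 1 1) \<in> SS C m" using assms(1) by (intro SS_mem) auto
  then have "SS C m \<noteq> {}" by auto
  then show ?thesis using fin_SS assms(2) by (subst Max_le_iff) (auto simp: SS_def)
qed

lemma Max_EE_le:
  assumes "m \<ge> 1" "\<And>i j. i \<in> {1..m} \<Longrightarrow> j \<in> {1..m} \<Longrightarrow> cmod (C i j) \<le> b"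
  shows "Max (EE C m) \<le> b"
proof -
  have "cmod (C 1 1) \<in> EE C m" using assms(1) by (intro EE_mem) auto
  then have "EE C m \<noteq> {}" by auto
  then show ?thesis using fin_EE assms(2) by (subst Max_le_iff) (auto simp: EE_def)
qed

lemma growth_eq: "m \<ge> 1 \<Longrightarrow> growth m C = Max (SS C m) / Max (EE C m)"
  unfolding growth_def SS_def EE_def by simp

lemma growth_nonneg: "0 \<le> growth m C"
proof (cases "m = 0")
  case True then show ?thesis by (simp add: growth_def)
next
  case False
  then have m: "m \<ge> 1" by simp
  have "0 \<le> cmod (ge C 1 1 1)" by simp
  also have "\<dots> \<le> Max (SS C m)" using m by (intro SS_le_Max) auto
  finally have a: "0 \<le> Max (SS C m)" .
  have "0 \<le> cmod (C 1 1)" by simp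
  also have "\<dots> \<le> Max (EE C m)" using m by (intro EE_le_Max) auto
  finally have b: "0 \<le> Max (EE C m)" .
  show ?thesis using a b growth_eq[OF m] by simp
qed

context cpe begin

lemma B_entry: "i \<in> {1..n} \<Longrightarrow> j \<in> {1..n} \<Longrightarrow> B i j = A i j + Dl i j"
  by (simp add: B_def)

lemma Dl_bound:
  assumes i: "i \<in> {1..n}" and j: "j \<in> {1..n}"
  shows "cmod (Dl i j) \<le> y (min i j)"
proof -
  have offd: "cmod (of_real (al k - 1) * ge A k a b) \<le> y k"
    if "k \<in> {1..n-1}" "a \<in> {k..n}" "b \<in> {k..n}" "(a,b) \<noteq> (k,k)" for k a b
  proof -
    have g1: "0 \<le> al k - 1" using al_ge1[of k] by simp
    have "cmod (of_real (al k - 1) * ge A k a b) = (al k - 1) * cmod (ge A k a b)"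
      using g1 by (simp add: norm_mult del: of_real_diff)
    also have "\<dots> \<le> (al k - 1) * ((1 + eps) * cmod (p k))"
      using Abound[OF that] g1 by (rule mult_left_mono)
    also have "\<dots> \<le> (al k - 1) * (al k * cmod (p k))"
      using al_ge[OF that(1)] g1 by (intro mult_left_mono mult_right_mono) auto
    also have "\<dots> \<le> (al k ^ 2 - 1) * cmod (p k)"
    proof -
      have "cmod (p k) \<le> cmod (p k) * al k"
        using mult_left_mono[OF al_ge1[of k] norm_ge_zero[of "p k"]] by simp
      then show ?thesis by (simp add: power2_eq_square algebra_simps)
    qed
    also have "\<dots> = y k"
    proof -
      have "k \<in> {1..n}" using that(1) by auto
      then show ?thesis using q_abs[of k] by (simp add: algebra_simps)
    qed
    finally show ?thesis .
  qed
  show ?thesis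
  proof (cases "i = j")
    case True
    have c: "cmod (complex_of_real (al i ^ 2 - 1)) = al i ^ 2 - 1"
    proof -
      have "1 \<le> al i ^ 2" using al_ge1[of i] by (simp add: one_le_power)
      then show ?thesis by (simp only: norm_of_real)
    qed
    have "cmod (Dl i j) = (al i ^ 2 - 1) * cmod (p i)"
    proof -
      have d: "Dl i i = complex_of_real (al i ^ 2 - 1) * p i" unfolding Dl_def by (rule if_P) (rule refl)
      show ?thesis by (simp only: True[symmetric] d norm_mult c)
    qed
    also have "\<dots> = y i" using q_abs[OF i] by (simp add: algebra_simps)
    finally show ?thesis using True by simp
  next
    case False
    show ?thesis
    proof (cases "i < j")
      case True
      then show ?thesis using offd[of i i j] i j by (simp add: Dl_def)
    next
      case False
      then have "j < i" using \<open>i \<noteq> j\<close> by simp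
      then show ?thesis using offd[of j i j] i j by (simp add: Dl_def)
    qed
  qed
qed

lemma q_eq: "k \<in> {1..n} \<Longrightarrow> ge B k k k = of_real (al k ^ 2) * p k"
  using KB[of k k k] by (simp add: Dl_def p_def algebra_simps)

lemma q_abs': "k \<in> {1..n} \<Longrightarrow> cmod (ge B k k k) = cmod (p k) + y k"
  using q_eq[of k] q_abs[of k] by (simp add: norm_mult norm_power)

lemma B_CP_bound:
  assumes k: "k \<in> {1..n}" and i: "i \<in> {k..n}" and j: "j \<in> {k..n}"
  shows "cmod (ge B k i j) \<le> cmod (ge B k k k)"
proof -
  have qa: "cmod (ge B k k k) = al k ^ 2 * cmod (p k)" using q_abs q_abs' k by simp
  have rowcol: "cmod (of_real (al k) * ge A k a b) \<le> cmod (ge B k k k)"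
    if "k \<in> {1..n-1}" "a \<in> {k..n}" "b \<in> {k..n}" "(a,b) \<noteq> (k,k)" for a b
  proof -
    have "cmod (of_real (al k) * ge A k a b) = al k * cmod (ge A k a b)"
      using al_ge1[of k] by (simp add: norm_mult)
    also have "\<dots> \<le> al k * ((1 + eps) * cmod (p k))"
      using Abound[OF that] al_ge1[of k] by (intro mult_left_mono) auto
    also have "\<dots> \<le> al k * (al k * cmod (p k))"
      using al_ge[OF that(1)] al_ge1[of k] by (intro mult_left_mono mult_right_mono) auto
    finally show ?thesis unfolding qa by (simp add: power2_eq_square)
  qed
  consider "i = k" "j = k" | "i = k" "j > k" | "i > k" "j = k" | "i > k" "j > k"
    using i j by (cases "i = k"; cases "j = k") auto
  then show ?thesis
  proof cases
    case 1 then show ?thesis by simp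
  next
    case 2
    have "ge B k i j = of_real (al k) * ge A k k j"
      using KB[of k k j] 2 i j k by (simp add: Dl_def algebra_simps)
    then show ?thesis using rowcol[of k j] 2 k j by auto
  next
    case 3
    have "ge B k i j = of_real (al k) * ge A k i k"
      using KB[of k i k] 3 i j k by (simp add: Dl_def algebra_simps)
    then show ?thesis using rowcol[of i k] 3 k i by auto
  next
    case 4
    have kk: "k \<in> {1..n-1}" using 4 k i by auto
    have "cmod (ge B k i j) = cmod (ge A k i j + Dl i j)" using KB[of k i j] k i j by simp
    also have "\<dots> \<le> cmod (ge A k i j) + cmod (Dl i j)" by (rule norm_triangle_ineq)
    also have "\<dots> \<le> (1 + eps) * cmod (p k) + y (min i j)"
      using Abound[OF kk i j] Dl_bound[of i j] 4 k i j by (intro add_mono) auto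
    also have "\<dots> \<le> cmod (p k) + y k"
      using y_Y2[of k "min i j"] 4 k i j by (auto simp: algebra_simps)
    finally show ?thesis using q_abs'[OF k] by simp
  qed
qed

lemma B_CP: "B \<in> CP n S"
proof -
  have piv: "\<forall>k\<in>{1..n}. ge B k k k \<noteq> 0"
  proof
    fix k assume k: "k \<in> {1..n}"
    have "0 < cmod (p k) + y k" using p_pos[OF k] y_nonneg[of k] by linarith
    then show "ge B k k k \<noteq> 0" using q_abs'[OF k] by auto
  qed
  have mi: "mat_in n S B"
  proof (cases "S = UNIV")
    case True then show ?thesis by (simp add: mat_in_def B_def)
  next
    case False
    then have SR: "S = \<real>" using S by auto
    have AR: "mat_in n \<real> A" using Amat SR by simp
    have "Dl i j \<in> \<real>" for i j
      unfolding Dl_def using ge_real[OF AR] by (auto simp: p_def)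
    moreover have "A i j \<in> \<real>" for i j using mat_in_all[OF AR] by simp
    ultimately show ?thesis unfolding SR mat_in_def B_def by auto
  qed
  have ed: "elim_defined n B" unfolding elim_defined_def using piv by auto
  have bd: "\<forall>k\<in>{1..n}. \<forall>i\<in>{k..n}. \<forall>j\<in>{k..n}. cmod (ge B k i j) \<le> cmod (ge B k k k)"
    using B_CP_bound by blast
  show ?thesis unfolding CP_def mem_Collect_eq
    using mi pivots_invertible[OF piv] ed bd by blast
qed

definition AL where "AL l i j = (if i \<le> l \<and> j \<le> l then A i j else 0)"

lemma ge_AL: "k \<le> l \<Longrightarrow> i \<le> l \<Longrightarrow> j \<le> l \<Longrightarrow> ge (AL l) k i j = ge A k i j"
proof (induction k arbitrary: i j)
  case 0 then show ?case by (simp add: AL_def)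
next
  case (Suc k)
  show ?case
  proof (cases "k = 0")
    case True then show ?thesis using Suc.prems by (simp add: AL_def)
  next
    case False
    then have k1: "1 \<le> k" by simp
    show ?thesis using Suc.IH[of i j] Suc.IH[of i k] Suc.IH[of k j] Suc.IH[of k k] Suc.prems
      by (simp add: ge_Suc[OF k1])
  qed
qed

lemma AL_CPeps:
  assumes l: "l \<le> n"
  shows "AL l \<in> CPeps l (\<lambda>_. eps) S"
proof -
  have mi: "mat_in l S (AL l)"
    unfolding mat_in_def
  proof (intro allI conjI impI)
    fix i j assume "i \<in> {1..l} \<and> j \<in> {1..l}"
    then show "AL l i j \<in> S" using Amat l unfolding mat_in_def AL_def by auto
  next
    fix i j assume a: "\<not> (i \<in> {1..l} \<and> j \<in> {1..l})"
    show "AL l i j = 0"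
    proof (cases "i \<le> l \<and> j \<le> l")
      case True
      then have "\<not> (i \<in> {1..n} \<and> j \<in> {1..n})" using a l by auto
      then have "A i j = 0" using Amat unfolding mat_in_def by blast
      then show ?thesis using True unfolding AL_def by simp
    next
      case False then show ?thesis unfolding AL_def by auto
    qed
  qed
  have piv: "\<forall>k\<in>{1..l}. ge (AL l) k k k \<noteq> 0"
    using ge_AL piv_nz l by (auto simp: p_def)
  have bd: "\<forall>k\<in>{1..l-1}. \<forall>i\<in>{k..l}. \<forall>j\<in>{k..l}. (i, j) \<noteq> (k, k) \<longrightarrow>
        cmod (ge (AL l) k i j) \<le> (1 + eps) * cmod (ge (AL l) k k k)"
  proof (intro ballI impI)
    fix k i j assume "k \<in> {1..l-1}" "i \<in> {k..l}" "j \<in> {k..l}" "(i, j) \<noteq> (k, k)"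
    then show "cmod (ge (AL l) k i j) \<le> (1 + eps) * cmod (ge (AL l) k k k)"
      using Abound[of k i j] ge_AL l by (auto simp: p_def)
  qed
  show ?thesis unfolding CPeps_def
    using mi pivots_invertible[OF piv] piv bd by (auto simp: elim_defined_def)
qed

abbreviation E where "E \<equiv> Max (EE A n)"

lemma E_pos: "E > 0"
proof -
  have "cmod (A 1 1) > 0" using p_pos[of 1] n1 by (simp add: p_def)
  also have "cmod (A 1 1) \<le> E" using n1 by (intro EE_le_Max) auto
  finally show ?thesis .
qed

lemma p_le_g:
  assumes "1 \<le> k" "k \<le> l" "l \<le> n"
  shows "cmod (p k) \<le> growth l (AL l) * E"
proof -
  have l1: "l \<ge> 1" using assms by simp
  have "cmod (p k) = cmod (ge (AL l) k k k)" using ge_AL assms by (simp add: p_def)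
  also have "\<dots> \<le> Max (SS (AL l) l)" using assms by (intro SS_le_Max) auto
  also have "\<dots> = growth l (AL l) * Max (EE (AL l) l)"
  proof -
    have "0 < cmod (AL l 1 1)" using p_pos[of 1] assms by (simp add: AL_def p_def)
    also have "\<dots> \<le> Max (EE (AL l) l)" using l1 by (intro EE_le_Max) auto
    finally have "Max (EE (AL l) l) \<noteq> 0" by simp
    then show ?thesis using growth_eq[OF l1] by simp
  qed
  also have "\<dots> \<le> growth l (AL l) * E"
  proof (intro mult_left_mono growth_nonneg Max_EE_le[OF l1])
    fix i j assume "i \<in> {1..l}" "j \<in> {1..l}"
    then show "cmod (AL l i j) \<le> E" using assms by (auto simp: AL_def intro!: EE_le_Max)
  qed
  finally show ?thesis .
qed

definition Dr where "Dr = 1 + eps * (2 + eps) * growth (n - 1) (AL (n - 1))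
   + eps * (\<Sum>i=1..n-2. growth i (AL i))"

lemma y1_bound: "y 1 \<le> (Dr - 1) * E"
proof -
  let ?g = "\<lambda>l. growth l (AL l)"
  have M: "M \<le> ?g (n-1) * E"
    unfolding M_def
  proof (subst Max_le_iff, simp, simp, intro ballI)
    fix x assume "x \<in> (\<lambda>l. cmod (p l)) ` {1..n - 1} \<union> {0}"
    then show "x \<le> ?g (n-1) * E"
      using p_le_g[of _ "n-1"] growth_nonneg[of "n-1" "AL (n-1)"] E_pos by auto
  qed
  have s1: "(\<Sum>l=1..n-1. cmod (p l)) \<le> (\<Sum>l=1..n-1. ?g l * E)"
    using p_le_g by (intro sum_mono) auto
  have s2: "(\<Sum>l=1..n-1. ?g l) \<le> (\<Sum>l=1..n-2. ?g l) + ?g (n-1)"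
  proof (cases "n = 1")
    case True then show ?thesis using growth_nonneg by simp
  next
    case False
    then have "n - 1 = Suc (n - 2)" using n1 by simp
    then show ?thesis using n1 False by (simp add: sum.atLeast_Suc_atMost sum.nat_ivl_Suc')
  qed
  have "y 1 = eps * (\<Sum>l=1..n-1. cmod (p l)) + eps * (1 + eps) * M" by (simp add: y_def)
  also have "\<dots> \<le> eps * ((\<Sum>l=1..n-2. ?g l) + ?g (n-1)) * E + eps * (1 + eps) * (?g (n-1) * E)"
  proof (intro add_mono)
    have "eps * (\<Sum>l=1..n-1. cmod (p l)) \<le> eps * ((\<Sum>l=1..n-1. ?g l) * E)"
      using s1 eps by (simp add: sum_distrib_right)
    also have "\<dots> \<le> eps * (((\<Sum>l=1..n-2. ?g l) + ?g (n-1)) * E)"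
      using s2 eps E_pos by (intro mult_left_mono mult_right_mono) auto
    finally show "eps * (\<Sum>l=1..n-1. cmod (p l)) \<le> eps * ((\<Sum>l=1..n-2. ?g l) + ?g (n-1)) * E"
      by (simp add: mult.assoc)
    show "eps * (1 + eps) * M \<le> eps * (1 + eps) * (?g (n-1) * E)"
      using M eps by (intro mult_left_mono) auto
  qed
  also have "\<dots> = (Dr - 1) * E" by (simp add: Dr_def algebra_simps)
  finally show ?thesis .
qed

lemma Dr_ge1: "1 \<le> Dr"
  unfolding Dr_def using eps growth_nonneg
  by (intro add_increasing2 add_nonneg_nonneg mult_nonneg_nonneg sum_nonneg) auto

lemma main_real: "growth n A \<le> Dr * growth n B"
proof -
  have SA: "Max (SS A n) \<le> Max (SS B n)"
  proof (rule Max_SS_le[OF n1])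
    fix k i j assume k: "k \<in> {1..n}" and i: "i \<in> {k..n}" and j: "j \<in> {k..n}"
    have "cmod (ge A k i j) \<le> cmod (p k) + y k"
    proof (cases "(i,j) = (k,k)")
      case True then show ?thesis using y_nonneg by (auto simp: p_def)
    next
      case False
      then have kk: "k \<in> {1..n-1}" using k i j by auto
      have "cmod (ge A k i j) \<le> (1 + eps) * cmod (p k)" using Abound[OF kk i j False] .
      also have "\<dots> \<le> cmod (p k) + y k"
      proof -
        have "eps * cmod (p k) \<le> eps * (2 + eps) * cmod (p k)"
          using eps by (intro mult_right_mono) auto
        then show ?thesis using y_Y1[OF kk] by (simp add: algebra_simps)
      qed
      finally show ?thesis .
    qed
    also have "\<dots> = cmod (ge B k k k)" using q_abs'[OF k] by simp
    also have "\<dots> \<le> Max (SS B n)" using k by (intro SS_le_Max) auto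
    finally show "cmod (ge A k i j) \<le> Max (SS B n)" .
  qed
  have EB: "Max (EE B n) \<le> Dr * E"
  proof (rule Max_EE_le[OF n1])
    fix i j assume i: "i \<in> {1..n}" and j: "j \<in> {1..n}"
    have "cmod (B i j) \<le> cmod (A i j) + cmod (Dl i j)"
      using B_entry[OF i j] norm_triangle_ineq by simp
    also have "\<dots> \<le> E + y 1"
    proof -
      have "y (min i j) \<le> y 1" using y_le_y1[of "min i j"] i j by (auto simp: min_def)
      then show ?thesis using EE_le_Max[OF i j, of A] Dl_bound[OF i j] by linarith
    qed
    also have "\<dots> \<le> Dr * E" using y1_bound by (simp add: algebra_simps)
    finally show "cmod (B i j) \<le> Dr * E" .
  qed
  have EBpos: "0 < Max (EE B n)"
  proof -
    have "0 < cmod (p 1)" using p_pos[of 1] n1 by simp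
    then have "0 < cmod (p 1) + y 1" using y_nonneg[of 1] by linarith
    also have "\<dots> = cmod (ge B 1 1 1)" using q_abs'[of 1] n1 by simp
    finally have "0 < cmod (ge B 1 1 1)" .
    also have "\<dots> = cmod (B 1 1)" by simp
    also have "\<dots> \<le> Max (EE B n)" using n1 by (intro EE_le_Max) auto
    finally show ?thesis .
  qed
  have SBnn: "0 \<le> Max (SS B n)"
  proof -
    have "cmod (ge B 1 1 1) \<le> Max (SS B n)" using n1 by (intro SS_le_Max) auto
    then show ?thesis using norm_ge_zero[of "ge B 1 1 1"] by linarith
  qed
  have "growth n A = Max (SS A n) / E" using growth_eq[OF n1] by simp
  also have "\<dots> \<le> Max (SS B n) / E" using SA E_pos by (simp add: divide_right_mono)
  also have "\<dots> = Dr * Max (SS B n) / (Dr * E)" using Dr_ge1 by simp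
  also have "\<dots> \<le> Dr * Max (SS B n) / Max (EE B n)"
    using EB EBpos SBnn Dr_ge1 E_pos by (intro divide_left_mono mult_nonneg_nonneg mult_pos_pos) auto
  also have "\<dots> = Dr * growth n B" using growth_eq[OF n1] by simp
  finally show ?thesis .
qed

end


definition IdM :: "nat \<Rightarrow> nat \<Rightarrow> nat \<Rightarrow> complex" where
  "IdM m i j = (if i = j \<and> i \<in> {1..m} then 1 else 0)"

lemma ge_IdM: "1 \<le> k \<Longrightarrow> k \<le> i \<Longrightarrow> k \<le> j \<Longrightarrow> ge (IdM m) k i j = IdM m i j"
proof (induction k arbitrary: i j)
  case 0 then show ?case by simp
next
  case (Suc k)
  show ?case
  proof (cases "k = 0")
    case True then show ?thesis by simp
  next
    case False
    then have k1: "1 \<le> k" by simp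
    have "ge (IdM m) k i k = IdM m i k" using Suc.IH[of i k] Suc.prems k1 by simp
    also have "IdM m i k = 0" using Suc.prems by (simp add: IdM_def)
    finally have "ge (IdM m) k i k = 0" .
    then show ?thesis using ge_Suc[OF k1, of "IdM m" i j] Suc.IH[of i j] Suc.prems k1 by simp
  qed
qed

lemma IdM_piv: "k \<in> {1..m} \<Longrightarrow> ge (IdM m) k k k = 1"
  using ge_IdM[of k k k m] by (simp add: IdM_def)

lemma IdM_mat_in: "0 \<in> S \<Longrightarrow> 1 \<in> S \<Longrightarrow> mat_in m S (IdM m)"
  unfolding mat_in_def IdM_def by auto

lemma IdM_inv: "mat_invertible m (IdM m)"
  by (rule pivots_invertible) (simp add: IdM_piv)

lemma IdM_CP: "0 \<in> S \<Longrightarrow> 1 \<in> S \<Longrightarrow> IdM m \<in> CP m S"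
  unfolding CP_def using IdM_mat_in IdM_inv IdM_piv ge_IdM
  by (auto simp: elim_defined_def IdM_def)

lemma IdM_CPeps: "0 \<in> S \<Longrightarrow> 1 \<in> S \<Longrightarrow> e \<ge> 0 \<Longrightarrow> IdM m \<in> CPeps m (\<lambda>_. e) S"
  unfolding CPeps_def using IdM_mat_in IdM_inv IdM_piv ge_IdM
  by (auto simp: elim_defined_def IdM_def)

lemma gset_nonneg: "X \<in> Y \<Longrightarrow> 0 \<le> gset m Y"
  unfolding gset_def by (rule SUP_upper2[of X]) (auto simp: growth_nonneg)

lemma gset_upper: "X \<in> Y \<Longrightarrow> ereal (growth m X) \<le> gset m Y"
  unfolding gset_def by (rule SUP_upper)

theorem mainTheorem4:
  fixes S :: "complex set" and \<epsilon> :: real and n :: nat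
  assumes "S = \<real> \<or> S = UNIV"
    and "\<epsilon> > 0"
    and "n \<ge> 1"
  shows "gset n (CP n S) \<ge>
    gset n (CPeps n (\<lambda>_. \<epsilon>) S) /
      (1 + ereal (\<epsilon> * (2 + \<epsilon>)) * gset (n - 1) (CPeps (n - 1) (\<lambda>_. \<epsilon>) S)
         + ereal \<epsilon> * (\<Sum>i=1..n-2. gset i (CPeps i (\<lambda>_. \<epsilon>) S)))"
proof -
  have S01: "0 \<in> S" "1 \<in> S" using assms(1) by auto
  define C where "C = gset n (CP n S)"
  define G where "G i = gset i (CPeps i (\<lambda>_. \<epsilon>) S)" for i
  define D where "D = 1 + ereal (\<epsilon> * (2 + \<epsilon>)) * G (n - 1) + ereal \<epsilon> * (\<Sum>i=1..n-2. G i)"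
  have C0: "0 \<le> C" unfolding C_def by (rule gset_nonneg[OF IdM_CP[OF S01]])
  have G0: "0 \<le> G i" for i unfolding G_def
    by (rule gset_nonneg[OF IdM_CPeps[OF S01]]) (use assms(2) in simp)
  have D1: "1 \<le> D"
  proof -
    have "0 \<le> ereal (\<epsilon> * (2 + \<epsilon>)) * G (n - 1)" using G0 assms(2) by simp
    moreover have "0 \<le> ereal \<epsilon> * (\<Sum>i=1..n-2. G i)"
      using G0 assms(2) by (simp add: sum_nonneg)
    ultimately show ?thesis unfolding D_def by (simp add: add_increasing2)
  qed
  have GCD: "G n \<le> D * C"
    unfolding G_def gset_def
  proof (rule SUP_least)
    fix A assume A: "A \<in> CPeps n (\<lambda>_. \<epsilon>) S"
    interpret cpe A n \<epsilon> S using A assms by unfold_locales auto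
    have "ereal (growth n A) \<le> ereal (Dr * growth n B)" using main_real by simp
    also have "\<dots> = ereal Dr * ereal (growth n B)" by simp
    also have "\<dots> \<le> D * C"
    proof (rule ereal_mult_mono)
      show "0 \<le> D" using D1 by (rule order_trans[rotated]) simp
      show "0 \<le> ereal (growth n B)" using growth_nonneg by simp
      show "ereal (growth n B) \<le> C" unfolding C_def by (rule gset_upper[OF B_CP])
      have "ereal Dr = 1 + ereal (\<epsilon> * (2 + \<epsilon>)) * ereal (growth (n - 1) (AL (n - 1)))
          + ereal \<epsilon> * (\<Sum>i=1..n-2. ereal (growth i (AL i)))"
        by (simp add: Dr_def sum_ereal)
      also have "\<dots> \<le> D"
        unfolding D_def
      proof (intro add_mono order_refl ereal_mult_left_mono sum_mono)
        show "ereal (growth (n - 1) (AL (n - 1))) \<le> G (n - 1)"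
          unfolding G_def by (rule gset_upper[OF AL_CPeps]) simp
        fix i assume "i \<in> {1..n-2}"
        then show "ereal (growth i (AL i)) \<le> G i"
          unfolding G_def by (intro gset_upper AL_CPeps) auto
      qed (use assms(2) in auto)
      finally show "ereal Dr \<le> D" .
    qed
    finally show "ereal (growth n A) \<le> D * C" .
  qed
  have "G n / D \<le> C"
  proof (cases "D = \<infinity>")
    case True then show ?thesis using C0 by simp
  next
    case False
    have "0 < D" using D1 by (rule less_le_trans[rotated]) simp
    then show ?thesis using False GCD by (simp add: ereal_divide_le_pos mult.commute)
  qed
  then show ?thesis unfolding C_def G_def D_def .
qed


end
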